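(* Define $A_0=E_3$ and $B_0=F_3q^{-G_1-G_3}$, let $X=A_0B_0-q^{-2}B_0A_0$, and recursively for $k\ge1$ $$A_k=[2]_q^{-1}(A_{k-1}X-XA_{k-1}),\qquad B_k=[2]_q^{-1}(XB_{k-1}-B_{k-1}X).$$ Let $\mathcal E_{\alpha+\beta}(\zeta)=\sum_{k\ge0}A_k\zeta^k$ and $\mathcal E_{\delta-\alpha-\beta}(\zeta)=\sum_{k\ge0}B_k\zeta^k$. Then in $\mathrm U_q(\mathfrak{gl}_3)[[\zeta]]$: $$\mathcal E_{\alpha+\beta}(\zeta)=\kappa_q^{-1}N'_{31}N'_{11}(-q^{-2}\zeta)^{-1},\qquad \mathcal E_{\delta-\alpha-\beta}(\zeta)=\kappa_q^{-1}q^{-1}N'_{11}(-q^{-2}\zeta)^{-1}N'_{13}.$$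
   Context: Setting: $\hbar\in\mathbb C$, $q=e^\hbar$, $q^2\neq1$, $\kappa_q=q-q^{-1}$, $[\nu]_q=(q^\nu-q^{-\nu})/\kappa_q$ (so $[2]_q=q+q^{-1}$, assumed nonzero). Let $\mathfrak g=\mathbb CG_1\oplus\mathbb CG_2\oplus\mathbb CG_3$ and define linear forms $\alpha_1,\alpha_2$ on $\mathfrak g$ by $\alpha_1(G_1)=1,\alpha_1(G_2)=-1,\alpha_1(G_3)=0$, $\alpha_2(G_1)=0,\alpha_2(G_2)=1,\alpha_2(G_3)=-1$; put $H_1=G_1-G_2$, $H_2=G_2-G_3$. $\mathrm U_q(\mathfrak{gl}_3)$ is the unital associative $\mathbb C$-algebra generated by $E_1,E_2,F_1,F_2$ and symbols $q^X$, $X\in\mathfrak g$, with relations $q^0=1$, $q^{X_1}q^{X_2}=q^{X_1+X_2}$, $q^XE_iq^{-X}=q^{\alpha_i(X)}E_i$, $q^XF_iq^{-X}=q^{-\alpha_i(X)}F_i$, $[E_i,F_j]=\delta_{ij}(q^{H_i}-q^{-H_i})/\kappa_q$, and for $i\ne j$ the $q$-Serre relations $E_i^2E_j-[2]_qE_iE_jE_i+E_jE_i^2=0$, $F_i^2F_j-[2]_qF_iF_jF_i+F_jF_i^2=0$. For $\nu\in\mathbb C$ one writes $q^{X+\nu}=q^\nu q^X$. Further $E_3=E_1E_2-q^{-1}E_2E_1$, $F_3=F_2F_1-qF_1F_2$. In $\mathrm U_q(\mathfrak{gl}_3)[[\zeta]]$ ($\zeta$ a formal variable) let $N'_{11}(\zeta)=1-\zeta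 q^{-2G_1}$ (invertible as a series), $N'_{13}=\kappa_q qF_3q^{-G_1-G_3}$, $N'_{31}=\kappa_qE_3$; $N'_{11}(c\zeta)$ denotes substitution $\zeta\mapsto c\zeta$. *)

theory Defs
  imports Complex_Main "HOL-Computational_Algebra.Formal_Power_Series"
begin

(* q^nu = e^(hbar nu) *)
definition qp :: "complex \<Rightarrow> complex \<Rightarrow> complex" where
  "qp h \<nu> = exp (h * \<nu>)"

definition kap :: "complex \<Rightarrow> complex" where
  "kap h = qp h 1 - qp h (-1)"

definition qint2 :: "complex \<Rightarrow> complex" where
  "qint2 h = qp h 1 + qp h (-1)"

definition ring_inv :: "'a::ring_1 \<Rightarrow> 'a" where
  "ring_inv u = (THE v. u * v = 1 \<and> v * u = 1)"

(* The defining relations of U_q(gl_3), realised in a unital ring 'a which is a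
   complex algebra via the central unital ring homomorphism \<iota> : complex \<Rightarrow> 'a.
   K a b c stands for q^X with X = a G1 + b G2 + c G3. *)
definition Uq_gl3_rels ::
  "complex \<Rightarrow> (complex \<Rightarrow> 'a::ring_1) \<Rightarrow> 'a \<Rightarrow> 'a \<Rightarrow> 'a \<Rightarrow> 'a
     \<Rightarrow> (complex \<Rightarrow> complex \<Rightarrow> complex \<Rightarrow> 'a) \<Rightarrow> bool" where
  "Uq_gl3_rels h \<iota> E1 E2 F1 F2 K \<longleftrightarrow>
     \<iota> 1 = 1 \<and> (\<forall>a b. \<iota> (a + b) = \<iota> a + \<iota> b) \<and> (\<forall>a b. \<iota> (a * b) = \<iota> a * \<iota> b) \<and>
     (\<forall>c x. \<iota> c * x = x * \<iota> c) \<and>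
     K 0 0 0 = 1 \<and>
     (\<forall>a b c a' b' c'. K a b c * K a' b' c' = K (a + a') (b + b') (c + c')) \<and>
     (\<forall>a b c. K a b c * E1 * K (-a) (-b) (-c) = \<iota> (qp h (a - b)) * E1) \<and>
     (\<forall>a b c. K a b c * E2 * K (-a) (-b) (-c) = \<iota> (qp h (b - c)) * E2) \<and>
     (\<forall>a b c. K a b c * F1 * K (-a) (-b) (-c) = \<iota> (qp h (-(a - b))) * F1) \<and>
     (\<forall>a b c. K a b c * F2 * K (-a) (-b) (-c) = \<iota> (qp h (-(b - c))) * F2) \<and>
     E1 * F1 - F1 * E1 = \<iota> (1 / kap h) * (K 1 (-1) 0 - K (-1) 1 0) \<and>
     E2 * F2 - F2 * E2 = \<iota> (1 / kap h) * (K 0 1 (-1) - K 0 (-1) 1) \<and>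
     E1 * F2 - F2 * E1 = 0 \<and>
     E2 * F1 - F1 * E2 = 0 \<and>
     E1 * E1 * E2 - \<iota> (qint2 h) * (E1 * E2 * E1) + E2 * E1 * E1 = 0 \<and>
     E2 * E2 * E1 - \<iota> (qint2 h) * (E2 * E1 * E2) + E1 * E2 * E2 = 0 \<and>
     F1 * F1 * F2 - \<iota> (qint2 h) * (F1 * F2 * F1) + F2 * F1 * F1 = 0 \<and>
     F2 * F2 * F1 - \<iota> (qint2 h) * (F2 * F1 * F2) + F1 * F2 * F2 = 0"

fun Aseq :: "'a::ring_1 \<Rightarrow> 'a \<Rightarrow> 'a \<Rightarrow> nat \<Rightarrow> 'a" where
  "Aseq c A0 X 0 = A0"
| "Aseq c A0 X (Suc k) = c * (Aseq c A0 X k * X - X * Aseq c A0 X k)"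

fun Bseq :: "'a::ring_1 \<Rightarrow> 'a \<Rightarrow> 'a \<Rightarrow> nat \<Rightarrow> 'a" where
  "Bseq c B0 X 0 = B0"
| "Bseq c B0 X (Suc k) = c * (X * Bseq c B0 X k - Bseq c B0 X k * X)"

definition N11 :: "(complex \<Rightarrow> 'a::ring_1) \<Rightarrow> (complex \<Rightarrow> complex \<Rightarrow> complex \<Rightarrow> 'a) \<Rightarrow> complex \<Rightarrow> 'a fps" where
  "N11 \<iota> K c = 1 - fps_const (\<iota> c * K (-2) 0 0) * fps_X"

end

theory Submission imports Defs begin

definition sc :: "(complex \<Rightarrow> 'a::ring_1) \<Rightarrow> complex \<Rightarrow> 'a \<Rightarrow> 'a" where
  "sc \<iota> c x = \<iota> c * x"

context
  fixes h :: complex and \<iota> :: "complex \<Rightarrow> 'a::ring_1"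
    and E1 E2 F1 F2 :: 'a and K :: "complex \<Rightarrow> complex \<Rightarrow> complex \<Rightarrow> 'a"
  assumes rels: "Uq_gl3_rels h \<iota> E1 E2 F1 F2 K" and q2: "(exp h)^2 \<noteq> 1"
begin

lemma i1: "\<iota> 1 = 1" using rels unfolding Uq_gl3_rels_def by metis
lemma iadd: "\<iota> (a + b) = \<iota> a + \<iota> b" using rels unfolding Uq_gl3_rels_def by metis
lemma imul: "\<iota> (a * b) = \<iota> a * \<iota> b" using rels unfolding Uq_gl3_rels_def by metis
lemma icent: "\<iota> c * x = x * \<iota> c" using rels unfolding Uq_gl3_rels_def by metis
lemma i0: "\<iota> 0 = 0" using iadd[of 0 0] by simp
lemma ineg: "\<iota> (- a) = - \<iota> a" using iadd[of a "-a"] i0 by (simp add: eq_neg_iff_add_eq_0 add.commute)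
lemma idiff: "\<iota> (a - b) = \<iota> a - \<iota> b" using iadd[of a "-b"] ineg[of b] by simp

lemma sc_l: "sc \<iota> c x * y = sc \<iota> c (x * y)" by (simp add: sc_def mult.assoc)
lemma sc_r: "x * sc \<iota> c y = sc \<iota> c (x * y)" 
proof -
  have "x * (\<iota> c * y) = (x * \<iota> c) * y" by (simp add: mult.assoc)
  also have "\<dots> = (\<iota> c * x) * y" by (metis icent)
  finally show ?thesis by (simp add: sc_def mult.assoc)
qed
lemma sc_sc: "sc \<iota> c (sc \<iota> d x) = sc \<iota> (c * d) x" by (simp add: sc_def imul mult.assoc)
lemma sc_add: "sc \<iota> c (x + y) = sc \<iota> c x + sc \<iota> c y" by (simp add: sc_def distrib_left)
lemma sc_diff: "sc \<iota> c (x - y) = sc \<iota> c x - sc \<iota> c y" by (simp add: sc_def right_diff_distrib)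
lemma sc_neg: "sc \<iota> c (- x) = - sc \<iota> c x" by (simp add: sc_def)
lemma sc_1: "sc \<iota> 1 x = x" by (simp add: sc_def i1)
lemma sc_0: "sc \<iota> 0 x = 0" by (simp add: sc_def i0)
lemma sc_plus: "sc \<iota> c x + sc \<iota> d x = sc \<iota> (c + d) x" by (simp add: sc_def iadd distrib_right)
lemma sc_minus: "sc \<iota> c x - sc \<iota> d x = sc \<iota> (c - d) x" by (simp add: sc_def idiff left_diff_distrib)
lemma sc_eq: "c = d \<Longrightarrow> sc \<iota> c x = sc \<iota> d x" by simp

lemmas scs = sc_l sc_r sc_sc sc_add sc_diff sc_neg sc_1 sc_0

lemma K0: "K 0 0 0 = 1" using rels unfolding Uq_gl3_rels_def by metis
lemma Kmul: "K a b c * K a' b' c' = K (a + a') (b + b') (c + c')" using rels unfolding Uq_gl3_rels_def by metis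
lemma Kinv: "K (-a) (-b) (-c) * K a b c = 1" by (simp add: Kmul K0)

lemma conjcomm: assumes "k * x * k' = sc \<iota> s x" "k' * k = 1" shows "k * x = sc \<iota> s (x * k)"
proof -
  have "k * x = k * x * (k' * k)" using assms by simp
  also have "\<dots> = sc \<iota> s x * k" using assms(1) by (simp add: mult.assoc[symmetric])
  finally show ?thesis by (simp add: sc_l)
qed

lemma KE1: "K a b c * E1 = sc \<iota> (qp h (a - b)) (E1 * K a b c)"
  by (rule conjcomm[OF _ Kinv]) (use rels in \<open>unfold Uq_gl3_rels_def sc_def, blast\<close>)
lemma KE2: "K a b c * E2 = sc \<iota> (qp h (b - c)) (E2 * K a b c)"
  by (rule conjcomm[OF _ Kinv]) (use rels in \<open>unfold Uq_gl3_rels_def sc_def, blast\<close>)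
lemma KF1: "K a b c * F1 = sc \<iota> (qp h (-(a - b))) (F1 * K a b c)"
  by (rule conjcomm[OF _ Kinv]) (use rels in \<open>unfold Uq_gl3_rels_def sc_def, blast\<close>)
lemma KF2: "K a b c * F2 = sc \<iota> (qp h (-(b - c))) (F2 * K a b c)"
  by (rule conjcomm[OF _ Kinv]) (use rels in \<open>unfold Uq_gl3_rels_def sc_def, blast\<close>)

lemma C1: "E1 * F1 = F1 * E1 + sc \<iota> (1 / kap h) (K 1 (-1) 0 - K (-1) 1 0)"
proof -
  have "E1 * F1 - F1 * E1 = sc \<iota> (1 / kap h) (K 1 (-1) 0 - K (-1) 1 0)"
    using rels unfolding Uq_gl3_rels_def sc_def by blast
  then show ?thesis by (metis add.commute diff_add_cancel)
qed
lemma C2: "E2 * F2 = F2 * E2 + sc \<iota> (1 / kap h) (K 0 1 (-1) - K 0 (-1) 1)"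
proof -
  have "E2 * F2 - F2 * E2 = sc \<iota> (1 / kap h) (K 0 1 (-1) - K 0 (-1) 1)"
    using rels unfolding Uq_gl3_rels_def sc_def by blast
  then show ?thesis by (metis add.commute diff_add_cancel)
qed
lemma C12: "E1 * F2 = F2 * E1"
proof - have "E1 * F2 - F2 * E1 = 0" using rels unfolding Uq_gl3_rels_def by blast then show ?thesis by simp qed
lemma C21: "E2 * F1 = F1 * E2"
proof - have "E2 * F1 - F1 * E2 = 0" using rels unfolding Uq_gl3_rels_def by blast then show ?thesis by simp qed

definition "e3 = E1 * E2 - sc \<iota> (qp h (-1)) (E2 * E1)"
definition "f3 = F2 * F1 - sc \<iota> (qp h 1) (F1 * F2)"


lemma qpm: "qp h a * qp h b = qp h (a + b)" by (simp add: qp_def exp_add distrib_left)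
lemma qpm2: "qp h a * (qp h b * z) = qp h (a + b) * z" by (simp add: qpm mult.assoc[symmetric])
lemma qp0: "qp h 0 = 1" by (simp add: qp_def)

lemma C1a: "E1 * (F1 * y) = F1 * (E1 * y) + sc \<iota> (1 / kap h) (K 1 (-1) 0 * y - K (-1) 1 0 * y)"
  by (simp add: mult.assoc[symmetric] C1 distrib_right sc_l left_diff_distrib)
lemma C2a: "E2 * (F2 * y) = F2 * (E2 * y) + sc \<iota> (1 / kap h) (K 0 1 (-1) * y - K 0 (-1) 1 * y)"
  by (simp add: mult.assoc[symmetric] C2 distrib_right sc_l left_diff_distrib)
lemma C12a: "E1 * (F2 * y) = F2 * (E1 * y)" by (simp add: mult.assoc[symmetric] C12)
lemma C21a: "E2 * (F1 * y) = F1 * (E2 * y)" by (simp add: mult.assoc[symmetric] C21)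
lemma KE1a: "K a b c * (E1 * y) = sc \<iota> (qp h (a - b)) (E1 * (K a b c * y))"
  by (simp add: mult.assoc[symmetric] KE1 sc_l)
lemma KE2a: "K a b c * (E2 * y) = sc \<iota> (qp h (b - c)) (E2 * (K a b c * y))"
  by (simp add: mult.assoc[symmetric] KE2 sc_l)
lemma KF1a: "K a b c * (F1 * y) = sc \<iota> (qp h (-(a - b))) (F1 * (K a b c * y))"
  by (simp add: mult.assoc[symmetric] KF1 sc_l)
lemma KF2a: "K a b c * (F2 * y) = sc \<iota> (qp h (-(b - c))) (F2 * (K a b c * y))"
  by (simp add: mult.assoc[symmetric] KF2 sc_l)
lemma Kmula: "K a b c * (K a' b' c' * y) = K (a + a') (b + b') (c + c') * y"
  by (simp add: mult.assoc[symmetric] Kmul)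

lemmas nf = C1 C2 C12 C21 C1a C2a C12a C21a KE1 KE2 KF1 KF2 KE1a KE2a KF1a KF2a Kmul Kmula K0 qpm qpm2 qp0

lemma scp2: "sc \<iota> c x + (sc \<iota> d x + r) = sc \<iota> (c + d) x + r" by (simp add: sc_plus add.assoc[symmetric])

lemma kap_nz: "kap h \<noteq> 0"
  using q2 unfolding kap_def qp_def by (auto simp: power2_eq_square exp_minus field_simps)
lemma coefL1: "qp h 1 / (kap h * kap h) = 1 / kap h + qp h (- 1) / (kap h * kap h)"
proof -
  have "qp h 1 = kap h + qp h (-1)" unfolding kap_def by simp
  then show ?thesis using kap_nz by (simp add: field_simps)
qed
lemma sc_split: "sc \<iota> (c + d) x = sc \<iota> c x + sc \<iota> d x" by (simp add: sc_plus)

lemma L1: "e3 * f3 = f3 * e3 + sc \<iota> (1 / kap h) (K 1 0 (-1) - K (-1) 0 1)"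
  by (simp add: e3_def f3_def algebra_simps scs nf sc_split coefL1)
lemma L2: "K a b c * e3 = sc \<iota> (qp h (a - c)) (e3 * K a b c)"
  by (simp add: e3_def f3_def algebra_simps scs nf sc_plus scp2)
lemma L3: "K a b c * f3 = sc \<iota> (qp h (c - a)) (f3 * K a b c)"
  by (simp add: e3_def f3_def algebra_simps scs nf sc_plus scp2)
lemma L1a: "e3 * (f3 * y) = f3 * (e3 * y) + sc \<iota> (1 / kap h) (K 1 0 (-1) * y - K (-1) 0 1 * y)"
  by (simp add: mult.assoc[symmetric] L1 distrib_right sc_l left_diff_distrib)
lemma L2a: "K a b c * (e3 * y) = sc \<iota> (qp h (a - c)) (e3 * (K a b c * y))"
  by (simp add: mult.assoc[symmetric] L2 sc_l)
lemma L3a: "K a b c * (f3 * y) = sc \<iota> (qp h (c - a)) (f3 * (K a b c * y))"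
  by (simp add: mult.assoc[symmetric] L3 sc_l)

lemmas nf3 = L1 L2 L3 L1a L2a L3a Kmul Kmula K0 qpm qpm2 qp0

definition "xx = e3 * (f3 * K (-1) 0 (-1)) - sc \<iota> (qp h (-2)) (f3 * (K (-1) 0 (-1) * e3))"

lemma R3: "K (-2) 0 0 * xx = xx * K (-2) 0 0"
  by (simp add: xx_def algebra_simps scs nf3 sc_plus scp2)
lemma coefR1:
  "qp h (- 2) / kap h + qp h (- 4) / kap h = 1 / kap h + qp h (- 2) / kap h - qint2 h * qp h (- 2)"
proof -
  have z: "exp h \<noteq> 0" by simp
  have "qp h (-4) = 1 - qint2 h * qp h (-2) * kap h"
    unfolding qp_def qint2_def kap_def using z
    by (simp add: exp_minus field_simps power2_eq_square flip: exp_add exp_diff)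
  then show ?thesis using kap_nz by (simp add: field_simps)
qed
lemma coefR2:
  "1 / kap h + qp h (- 2) / kap h = 1 / kap h + qp h 2 / kap h - qint2 h"
proof -
  have z: "exp h \<noteq> 0" by simp
  have "qp h 2 - qp h (-2) = qint2 h * kap h"
    unfolding qp_def qint2_def kap_def using z
    by (simp add: exp_minus field_simps power2_eq_square flip: exp_add exp_diff)
  then show ?thesis using kap_nz by (simp add: field_simps)
qed

lemma R1: "e3 * xx - xx * e3 = sc \<iota> (- (qp h (-2) * qint2 h)) (e3 * K (-2) 0 0)"
  apply (simp add: xx_def algebra_simps scs nf3 sc_plus scp2)
  apply (rule sc_eq)
  apply (rule coefR1)
  done
lemma R2: "xx * (f3 * K (-1) 0 (-1)) - (f3 * K (-1) 0 (-1)) * xx = sc \<iota> (- (qp h (-2) * qint2 h)) (K (-2) 0 0 * (f3 * K (-1) 0 (-1)))"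
  apply (simp add: xx_def algebra_simps scs nf3 sc_plus scp2)
  apply (rule sc_eq)
  apply (rule coefR2)
  done

end

lemma pow_comm: "(t::'a::ring_1) * x = x * t \<Longrightarrow> t ^ k * x = x * t ^ k"
  by (induction k) (simp, metis mult.assoc power_Suc)

theorem mainTheorem7:
  fixes h :: complex and \<iota> :: "complex \<Rightarrow> 'a::ring_1"
    and E1 E2 F1 F2 :: 'a and K :: "complex \<Rightarrow> complex \<Rightarrow> complex \<Rightarrow> 'a"
  assumes q2: "(exp h)^2 \<noteq> 1"
    and two: "qint2 h \<noteq> 0"
    and rels: "Uq_gl3_rels h \<iota> E1 E2 F1 F2 K"
  defines "E3 \<equiv> E1 * E2 - \<iota> (qp h (-1)) * E2 * E1"
    and "F3 \<equiv> F2 * F1 - \<iota> (qp h 1) * F1 * F2"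
  defines "A0 \<equiv> E3"
    and "B0 \<equiv> F3 * K (-1) 0 (-1)"
  defines "X \<equiv> A0 * B0 - \<iota> (qp h (-2)) * B0 * A0"
  defines "N13 \<equiv> \<iota> (kap h * qp h 1) * F3 * K (-1) 0 (-1)"
    and "N31 \<equiv> \<iota> (kap h) * E3"
  shows "Abs_fps (Aseq (\<iota> (1 / qint2 h)) A0 X)
           = fps_const (\<iota> (1 / kap h)) * fps_const N31 * ring_inv (N11 \<iota> K (- qp h (-2)))
       \<and> Abs_fps (Bseq (\<iota> (1 / qint2 h)) B0 X)
           = fps_const (\<iota> (1 / kap h) * \<iota> (qp h (-1))) * ring_inv (N11 \<iota> K (- qp h (-2)))
               * fps_const N13"
proof -
  note scs = scs[OF rels q2] 
  have isc: "\<And>c x. \<iota> c * x = sc \<iota> c x" by (simp add: sc_def)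
  have E3e: "E3 = e3 h \<iota> E1 E2" unfolding E3_def e3_def[OF rels q2] sc_def by (simp add: mult.assoc)
  have F3e: "F3 = f3 h \<iota> F1 F2" unfolding F3_def f3_def[OF rels q2] sc_def by (simp add: mult.assoc)
  have Xe: "X = xx h \<iota> E1 E2 F1 F2 K"
    unfolding X_def xx_def[OF rels q2] A0_def B0_def E3e F3e sc_def by (simp add: mult.assoc)
  define T where "T = K (-2) 0 0"
  define a where "a = - qp h (-2)"
  define c where "c = \<iota> (1 / qint2 h)"
  have R1': "E3 * X - X * E3 = sc \<iota> (qint2 h * a) (E3 * T)"
    using R1[OF rels q2] unfolding E3e Xe T_def a_def by (simp add: mult.commute)
  have R2': "X * B0 - B0 * X = sc \<iota> (qint2 h * a) (T * B0)"
    using R2[OF rels q2] unfolding B0_def F3e Xe T_def a_def by (simp add: mult.commute)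
  have R3': "T * X = X * T" using R3[OF rels q2] unfolding Xe T_def .
  have TkX: "T ^ k * X = X * T ^ k" for k using pow_comm[OF R3'] .
  have coef: "1 / qint2 h * (a ^ k * (qint2 h * a)) = a ^ Suc k" for k
    using two by (simp add: field_simps)
  have Aform: "Aseq c A0 X k = sc \<iota> (a ^ k) (E3 * T ^ k)" for k
  proof (induction k)
    case 0 show ?case by (simp add: A0_def scs)
  next
    case (Suc k)
    have "Aseq c A0 X (Suc k) = sc \<iota> (1 / qint2 h) (sc \<iota> (a ^ k) (E3 * T ^ k) * X - X * sc \<iota> (a ^ k) (E3 * T ^ k))"
      using Suc by (simp add: c_def sc_def)
    also have "\<dots> = sc \<iota> (1 / qint2 h * a ^ k) ((E3 * X - X * E3) * T ^ k)"
      by (simp add: scs mult.assoc TkX left_diff_distrib)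
    also have "\<dots> = sc \<iota> (a ^ Suc k) (E3 * T ^ Suc k)"
      using two by (simp add: R1' scs mult.assoc coef power_Suc mult.commute del: power_Suc2)
    finally show ?case .
  qed
  have Bform: "Bseq c B0 X k = sc \<iota> (a ^ k) (T ^ k * B0)" for k
  proof (induction k)
    case 0 show ?case by (simp add: scs)
  next
    case (Suc k)
    have "Bseq c B0 X (Suc k) = sc \<iota> (1 / qint2 h) (X * sc \<iota> (a ^ k) (T ^ k * B0) - sc \<iota> (a ^ k) (T ^ k * B0) * X)"
      using Suc by (simp add: c_def sc_def)
    also have "\<dots> = sc \<iota> (1 / qint2 h * a ^ k) (T ^ k * (X * B0 - B0 * X))"
      by (simp add: scs mult.assoc[symmetric] TkX right_diff_distrib)
    also have "\<dots> = sc \<iota> (a ^ Suc k) (T ^ Suc k * B0)"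
      using two by (simp add: R2' scs mult.assoc coef power_Suc2 mult.commute del: power_Suc)
    finally show ?case .
  qed
  define G where "G = Abs_fps (\<lambda>k. sc \<iota> (a ^ k) (T ^ k))"
  have N: "N11 \<iota> K (- qp h (-2)) = 1 - fps_const (sc \<iota> a T) * fps_X"
    unfolding N11_def a_def T_def sc_def by simp
  have uG: "sc \<iota> a T * sc \<iota> (a ^ n) (T ^ n) = sc \<iota> (a ^ Suc n) (T ^ Suc n)" for n
    by (simp add: scs mult.commute)
  have Gu: "sc \<iota> (a ^ n) (T ^ n) * sc \<iota> a T = sc \<iota> (a ^ Suc n) (T ^ Suc n)" for n
    by (simp add: scs mult.commute power_Suc2 del: power_Suc)
  have NG: "N11 \<iota> K (- qp h (-2)) * G = 1"
  proof (rule fps_ext)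
    fix n
    show "fps_nth (N11 \<iota> K (- qp h (-2)) * G) n = fps_nth 1 n"
      unfolding N
      by (cases n) (simp_all add: G_def left_diff_distrib mult.assoc uG scs mult.commute)
  qed
  have GN: "G * N11 \<iota> K (- qp h (-2)) = 1"
  proof (rule fps_ext)
    fix n
    show "fps_nth (G * N11 \<iota> K (- qp h (-2))) n = fps_nth 1 n"
      unfolding N
      by (cases n) (simp_all add: G_def right_diff_distrib mult.assoc[symmetric] Gu scs mult.commute power_commutes)
  qed
  have inv: "ring_inv (N11 \<iota> K (- qp h (-2))) = G"
    unfolding ring_inv_def
  proof (rule the_equality)
    show "N11 \<iota> K (- qp h (-2)) * G = 1 \<and> G * N11 \<iota> K (- qp h (-2)) = 1" using NG GN by simp
  next
    fix v assume v: "N11 \<iota> K (- qp h (- 2)) * v = 1 \<and> v * N11 \<iota> K (- qp h (- 2)) = 1"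
    have "v = v * (N11 \<iota> K (- qp h (-2)) * G)" using NG by simp
    also have "\<dots> = G" using v by (simp add: mult.assoc[symmetric])
    finally show "v = G" .
  qed
  have kn: "kap h \<noteq> 0" by (rule kap_nz[OF rels q2])
  have qq: "qp h (-1) * qp h 1 = 1" by (simp add: qp_def flip: exp_add)
  have part1: "Abs_fps (Aseq c A0 X) = fps_const (\<iota> (1 / kap h)) * fps_const N31 * G"
  proof (rule fps_ext)
    fix n
    show "fps_nth (Abs_fps (Aseq c A0 X)) n = fps_nth (fps_const (\<iota> (1 / kap h)) * fps_const N31 * G) n"
      using kn by (simp add: Aform N31_def G_def isc scs)
  qed
  have qq2: "qp h 1 * (z * qp h (-1)) = z" for z
    using qq by (simp add: algebra_simps)
  have part2: "Abs_fps (Bseq c B0 X) = fps_const (\<iota> (1 / kap h) * \<iota> (qp h (-1))) * G * fps_const N13"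
  proof (rule fps_ext)
    fix n
    have "N13 = sc \<iota> (kap h * qp h 1) B0" unfolding N13_def B0_def sc_def by (simp add: mult.assoc)
    then show "fps_nth (Abs_fps (Bseq c B0 X)) n = fps_nth (fps_const (\<iota> (1 / kap h) * \<iota> (qp h (-1))) * G * fps_const N13) n"
      using kn qq by (simp add: Bform G_def isc scs mult.assoc field_simps qq2)
  qed
  show ?thesis using part1 part2 unfolding inv c_def by simp
qed

end
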